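(* (i) There exists a set $A \subseteq \mathbb{N}$ that contains arithmetic progressions of every finite length but is not fractionally dense. (ii) There exists a set $A \subseteq \mathbb{N}$ that is fractionally dense but contains no arithmetic progression of length $3$ or more.
   Context: $\mathbb{N} = \{1,2,3,\ldots\}$. For $A \subseteq \mathbb{N}$, the quotient set is $R(A) = \{a/a' : a, a' \in A\}$, and $A$ is called fractionally dense if the closure of $R(A)$ in $\mathbb{R}$ equals $[0,\infty)$. An arithmetic progression of length $n$ in $A$ is a sequence $c, c+d, c+2d, \ldots, c+(n-1)d$ of elements of $A$ with $d \geq 1$ an integer. *)

theory Defs
  imports "HOL-Analysis.Analysis"
begin

definition quotient_set :: "nat set \<Rightarrow> real set" where
  "quotient_set A = {real a / real a' | a a'. a \<in> A \<and> a' \<in> A}"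

definition fractionally_dense :: "nat set \<Rightarrow> bool" where
  "fractionally_dense A \<longleftrightarrow> closure (quotient_set A) = {0..}"

definition has_AP :: "nat set \<Rightarrow> nat \<Rightarrow> bool" where
  "has_AP A n \<longleftrightarrow> (\<exists>c d. d \<ge> 1 \<and> (\<forall>i<n. c + i * d \<in> A))"

end

theory Submission
  imports Defs
begin

definition A1 :: "nat set" where
  "A1 = {x. \<exists>k. 8^k \<le> x \<and> x \<le> 2*8^k}"

lemma A1_ratio:
  assumes "a \<in> A1" "b \<in> A1" shows "a \<le> 2*b \<or> a \<ge> 4*b"
proof -
  obtain j where j: "8^j \<le> a" "a \<le> 2*(8::nat)^j" using assms(1) by (auto simp: A1_def)
  obtain k where k: "8^k \<le> b" "b \<le> 2*(8::nat)^k" using assms(2) by (auto simp: A1_def)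
  show ?thesis
  proof (cases "j \<le> k")
    case True
    hence "(8::nat)^j \<le> 8^k" by (simp add: power_increasing)
    then show ?thesis using j k by linarith
  next
    case False
    hence "(8::nat)^(Suc k) \<le> 8^j" by (intro power_increasing) auto
    then show ?thesis using j k by simp
  qed
qed

lemma part1: "\<exists>A :: nat set. 0 \<notin> A \<and> (\<forall>n. has_AP A n) \<and> \<not> fractionally_dense A"
proof (intro exI[of _ A1] conjI allI)
  show "0 \<notin> A1" by (auto simp: A1_def)
next
  fix n
  have "n < 8^n" by (rule less_exp[THEN less_le_trans]) (simp add: power_mono)
  hence "\<forall>i<n. 8^n + i * 1 \<in> A1" unfolding A1_def by (auto intro!: exI[of _ n])
  then show "has_AP A1 n" unfolding has_AP_def by blast
next
  let ?S = "{..2::real} \<union> {4..}"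
  have "quotient_set A1 \<subseteq> ?S"
  proof
    fix r assume "r \<in> quotient_set A1"
    then obtain a b where r: "r = real a / real b" and ab: "a \<in> A1" "b \<in> A1"
      by (auto simp: quotient_set_def)
    have "b \<ge> 1" using ab(2) proof -
      obtain k where "8^k \<le> b" using ab(2) by (auto simp: A1_def)
      moreover have "(1::nat) \<le> 8^k" by simp
      ultimately show ?thesis by linarith
    qed
    hence bp: "real b > 0" by simp
    from A1_ratio[OF ab] show "r \<in> ?S"
    proof
      assume "a \<le> 2*b" hence "real a \<le> 2 * real b" by linarith
      thus ?thesis using bp r by (simp add: divide_le_eq)
    next
      assume "a \<ge> 4*b" hence "real a \<ge> 4 * real b" by linarith
      thus ?thesis using bp r by (simp add: le_divide_eq)
    qed
  qed
  moreover have "closed ?S" by (intro closed_Un closed_atMost closed_atLeast)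
  ultimately have "closure (quotient_set A1) \<subseteq> ?S" by (rule closure_minimal)
  moreover have "(3::real) \<notin> ?S" by simp
  ultimately show "\<not> fractionally_dense A1" unfolding fractionally_dense_def
  proof (intro notI)
    assume c: "closure (quotient_set A1) \<subseteq> ?S" "(3::real) \<notin> ?S" "closure (quotient_set A1) = {0..}"
    have "(3::real) \<in> {0..}" by simp
    with c show False by blast
  qed
qed

definition NN :: "nat \<Rightarrow> nat" where "NN n = 4^(n*n)"
definition PP :: "nat \<Rightarrow> nat" where "PP n = fst (prod_decode n) + 1"
definition QQ :: "nat \<Rightarrow> nat" where "QQ n = snd (prod_decode n) + 1"
definition A2 :: "nat set" where "A2 = {m. \<exists>n. m = PP n * NN n \<or> m = QQ n * NN n}"

lemma PP_le: "PP n \<le> n + 1"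
  using le_prod_encode_1[of "fst (prod_decode n)" "snd (prod_decode n)"]
  by (simp add: PP_def)
lemma QQ_le: "QQ n \<le> n + 1"
  using le_prod_encode_2[of "snd (prod_decode n)" "fst (prod_decode n)"]
  by (simp add: QQ_def)

lemma NN_pos: "NN n > 0" by (simp add: NN_def)

lemma four_bound: "2 * (n + 1) < (4::nat)^(2*n+1)"
proof (induction n)
  case 0 then show ?case by simp
next
  case (Suc n)
  have "2 * (Suc n + 1) \<le> 16 * (2 * (n+1))" by simp
  also have "\<dots> < 16 * 4^(2*n+1)" using Suc by simp
  also have "\<dots> = (4::nat)^(2 * Suc n + 1)" by (simp add: power_add)
  finally show ?case .
qed

lemma NN_step: "2 * (n + 1) * NN n < NN (Suc n)"
proof -
  have "NN (Suc n) = NN n * 4^(2*n+1)"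
    by (simp add: NN_def power_add[symmetric] algebra_simps)
  moreover have "2 * (n + 1) * NN n < 4^(2*n+1) * NN n"
    using four_bound[of n] NN_pos[of n] by (rule mult_strict_right_mono)
  ultimately show ?thesis by (simp add: mult.commute)
qed

lemma NN_mono: "m \<le> n \<Longrightarrow> NN m \<le> NN n"
  unfolding NN_def by (intro power_increasing) (auto intro: mult_le_mono)

lemma sep: assumes "m < n" "u \<le> (m+1) * NN m" shows "2 * u < NN n"
proof -
  have "2 * u \<le> 2 * (m+1) * NN m" using assms(2) by simp
  also have "\<dots> < NN (Suc m)" by (rule NN_step)
  also have "\<dots> \<le> NN n" using assms(1) by (intro NN_mono) simp
  finally show ?thesis .
qed

lemma A2_elem:
  assumes "x \<in> A2"
  obtains i a where "x = a * NN i" "1 \<le> a" "a \<le> i + 1" "a = PP i \<or> a = QQ i"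
proof -
  from assms obtain n where "x = PP n * NN n \<or> x = QQ n * NN n" unfolding A2_def by blast
  then show ?thesis
  proof
    assume "x = PP n * NN n" then show ?thesis using that[of "PP n" n] PP_le[of n] by (simp add: PP_def)
  next
    assume "x = QQ n * NN n" then show ?thesis using that[of "QQ n" n] QQ_le[of n] by (simp add: QQ_def)
  qed
qed

lemma noAP3:
  assumes "x \<in> A2" "y \<in> A2" "z \<in> A2" "x < y" "y < z" "x + z = 2 * y"
  shows False
proof -
  obtain i a where x: "x = a * NN i" "1 \<le> a" "a \<le> i + 1" "a = PP i \<or> a = QQ i"
    using A2_elem[OF assms(1)] by blast
  obtain j b where y: "y = b * NN j" "1 \<le> b" "b \<le> j + 1" "b = PP j \<or> b = QQ j"
    using A2_elem[OF assms(2)] by blast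
  obtain k c where z: "z = c * NN k" "1 \<le> c" "c \<le> k + 1" "c = PP k \<or> c = QQ k"
    using A2_elem[OF assms(3)] by blast
  have xb: "x \<le> (i+1) * NN i" unfolding x(1) using x(3) by (rule mult_right_mono) simp
  have yb: "y \<le> (j+1) * NN j" unfolding y(1) using y(3) by (rule mult_right_mono) simp
  have zb: "z \<le> (k+1) * NN k" unfolding z(1) using z(3) by (rule mult_right_mono) simp
  have zge: "NN k \<le> z" using z by simp
  have yge: "NN j \<le> y" using y by simp
  have xge: "NN i \<le> x" using x by simp
  consider "j < k" | "k < j" | "j = k" by linarith
  then show False
  proof cases
    case 1
    have "2 * y < NN k" using sep[OF 1 yb] .
    then show False using zge assms by linarith
  next
    case 2
    have "2 * z < NN j" using sep[OF 2 zb] .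
    then show False using yge assms by linarith
  next
    case 3
    consider "i < k" | "k < i" | "i = k" by linarith
    then show False
    proof cases
      case 1
      have x2: "2 * x < NN k" using sep[OF 1 xb] .
      have "x = 2 * b * NN k - c * NN k" using assms(6) y z 3 by simp
      hence "NN k dvd x" by (simp add: dvd_diff_nat)
      moreover have "x > 0" using x NN_pos[of i] by simp
      ultimately have "NN k \<le> x" by (simp add: dvd_imp_le)
      then show False using x2 by linarith
    next
      case 2
      have "2 * z < NN i" using sep[OF 2 zb] .
      then show False using xge assms by linarith
    next
      case 4: 3
      show False using x y z 3 4 assms(4,5) by auto
    qed
  qed
qed

lemma part2: "\<exists>A :: nat set. 0 \<notin> A \<and> fractionally_dense A \<and> (\<forall>n\<ge>3. \<not> has_AP A n)"
proof (intro exI[of _ A2] conjI allI impI)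
  show "0 \<notin> A2" using NN_pos by (auto simp: A2_def PP_def QQ_def)
next
  fix n :: nat assume n: "n \<ge> 3"
  show "\<not> has_AP A2 n"
  proof
    assume "has_AP A2 n"
    then obtain c d where d: "d \<ge> 1" and h: "\<forall>i<n. c + i * d \<in> A2"
      unfolding has_AP_def by blast
    have "c + 0 * d \<in> A2" "c + 1 * d \<in> A2" "c + 2 * d \<in> A2" using h[rule_format, of 0] h[rule_format, of 1] h[rule_format, of 2] n by auto
    then show False using noAP3[of c "c + d" "c + 2*d"] d by simp
  qed
next
  show "fractionally_dense A2"
    unfolding fractionally_dense_def
  proof (rule antisym)
    have "quotient_set A2 \<subseteq> {0..}" by (auto simp: quotient_set_def)
    then show "closure (quotient_set A2) \<subseteq> {0..}"
      by (rule closure_minimal) (rule closed_atLeast)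
  next
    show "{0..} \<subseteq> closure (quotient_set A2)"
    proof
      fix x :: real assume "x \<in> {0..}"
      hence x0: "x \<ge> 0" by simp
      show "x \<in> closure (quotient_set A2)"
        unfolding closure_approachable
      proof (intro allI impI)
        fix e :: real assume e: "e > 0"
        obtain q where q: "inverse (real (Suc q)) < e" using reals_Archimedean[OF e] by blast
        define p where "p = nat \<lfloor>x * real (Suc q)\<rfloor>"
        have p1: "real p \<le> x * real (Suc q)" using x0 unfolding p_def by simp
        have p2: "x * real (Suc q) < real p + 1" using x0 unfolding p_def by linarith
        define m where "m = prod_encode (p, q)"
        have Pm: "PP m = p + 1" and Qm: "QQ m = q + 1" by (simp_all add: m_def PP_def QQ_def)
        define r where "r = (real p + 1) / real (Suc q)"
        have "r \<in> quotient_set A2"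
        proof -
          have "PP m * NN m \<in> A2" "QQ m * NN m \<in> A2" by (auto simp: A2_def)
          moreover have "r = real (PP m * NN m) / real (QQ m * NN m)"
            
          proof -
            have "real (NN m) \<noteq> 0" using NN_pos[of m] by simp
            hence "real (PP m * NN m) / real (QQ m * NN m) = real (PP m) / real (QQ m)"
              unfolding of_nat_mult by simp
            then show ?thesis by (simp add: Pm Qm r_def)
          qed
          ultimately show ?thesis unfolding quotient_set_def by blast
        qed
        moreover have "dist r x < e"
        proof -
          have sq: "real (Suc q) > 0" by simp
          have "x < r" using p2 sq by (simp add: r_def pos_less_divide_eq mult.commute)
          moreover have "r \<le> x + inverse (real (Suc q))"
          proof -
            have "real p / real (Suc q) \<le> x" using p1 sq by (simp add: divide_le_eq mult.commute)
            moreover have "r = real p / real (Suc q) + inverse (real (Suc q))"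
              by (simp add: r_def add_divide_distrib divide_inverse distrib_right)
            ultimately show ?thesis by simp
          qed
          ultimately show ?thesis using q by (simp add: dist_real_def)
        qed
        ultimately show "\<exists>y\<in>quotient_set A2. dist y x < e" by blast
      qed
    qed
  qed
qed

theorem mainTheorem4:
  shows "(\<exists>A :: nat set. 0 \<notin> A \<and> (\<forall>n. has_AP A n) \<and> \<not> fractionally_dense A)
       \<and> (\<exists>A :: nat set. 0 \<notin> A \<and> fractionally_dense A \<and> (\<forall>n\<ge>3. \<not> has_AP A n))"
  using part1 part2 by blast

end
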